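(* Let $C,D,E$ be convex subcomplexes of a CAT(0) cube complex $\mathcal X$. Then $\mathfrak g_{\mathfrak g_C(D)}(E)$, $\mathfrak g_C(\mathfrak g_D(E))$ and $\mathfrak g_C(\mathfrak g_E(D))$ are pairwise parallel.
   Context: For convex $Y$, the gate map $\mathfrak g_Y:\mathcal X\to Y$ sends each $0$-cube to the unique closest $0$-cube of $Y$ (combinatorial metric on the $1$-skeleton) and extends cubically. Two convex subcomplexes are parallel if exactly the same hyperplanes intersect them. *)

theory Defs
  imports Main
begin

text \<open>A CAT(0) cube complex is represented by its 1-skeleton, which is a median graph
  (Chepoi/Roller); the complex is recovered from its 1-skeleton by filling in cubes.\<close>

definition walk :: "('a \<Rightarrow> 'a \<Rightarrow> bool) \<Rightarrow> 'a list \<Rightarrow> bool" where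
  "walk adj xs \<longleftrightarrow> xs \<noteq> [] \<and> (\<forall>i. Suc i < length xs \<longrightarrow> adj (xs ! i) (xs ! Suc i))"

definition gdist :: "('a \<Rightarrow> 'a \<Rightarrow> bool) \<Rightarrow> 'a \<Rightarrow> 'a \<Rightarrow> nat" where
  "gdist adj x y = (LEAST n. \<exists>xs. walk adj xs \<and> hd xs = x \<and> last xs = y \<and> length xs = Suc n)"

definition interval :: "('a \<Rightarrow> 'a \<Rightarrow> bool) \<Rightarrow> 'a \<Rightarrow> 'a \<Rightarrow> 'a set" where
  "interval adj x y = {z. gdist adj x z + gdist adj z y = gdist adj x y}"

definition median_graph :: "('a \<Rightarrow> 'a \<Rightarrow> bool) \<Rightarrow> bool" where
  "median_graph adj \<longleftrightarrow>
     (\<forall>x y. adj x y \<longrightarrow> adj y x) \<and> (\<forall>x. \<not> adj x x) \<and>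
     (\<forall>x y. \<exists>xs. walk adj xs \<and> hd xs = x \<and> last xs = y) \<and>
     (\<forall>x y z. \<exists>!m. m \<in> interval adj x y \<and> m \<in> interval adj y z \<and> m \<in> interval adj x z)"

text \<open>A convex subcomplex is determined by its (nonempty, combinatorially convex) set of 0-cubes.\<close>
definition convex_sub :: "('a \<Rightarrow> 'a \<Rightarrow> bool) \<Rightarrow> 'a set \<Rightarrow> bool" where
  "convex_sub adj Y \<longleftrightarrow> Y \<noteq> {} \<and> (\<forall>x\<in>Y. \<forall>y\<in>Y. interval adj x y \<subseteq> Y)"

definition gate :: "('a \<Rightarrow> 'a \<Rightarrow> bool) \<Rightarrow> 'a set \<Rightarrow> 'a \<Rightarrow> 'a" where
  "gate adj Y x = (THE g. g \<in> Y \<and> (\<forall>y\<in>Y. y \<noteq> g \<longrightarrow> gdist adj x g < gdist adj x y))"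

text \<open>Edges (1-cubes) as 2-element vertex sets; hyperplanes are the classes of the
  equivalence relation on edges generated by being opposite edges of a square (2-cube).\<close>
definition is_edge :: "('a \<Rightarrow> 'a \<Rightarrow> bool) \<Rightarrow> 'a set \<Rightarrow> bool" where
  "is_edge adj e \<longleftrightarrow> (\<exists>u v. e = {u, v} \<and> adj u v)"

definition sq_opp :: "('a \<Rightarrow> 'a \<Rightarrow> bool) \<Rightarrow> 'a set \<Rightarrow> 'a set \<Rightarrow> bool" where
  "sq_opp adj e f \<longleftrightarrow> (\<exists>u v x y. e = {u, v} \<and> f = {x, y} \<and>
      adj u v \<and> adj v y \<and> adj y x \<and> adj x u \<and> u \<noteq> y \<and> v \<noteq> x)"

definition hyperplanes :: "('a \<Rightarrow> 'a \<Rightarrow> bool) \<Rightarrow> 'a set set set" where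
  "hyperplanes adj = {{f. (sq_opp adj)\<^sup>*\<^sup>* e f} | e. is_edge adj e}"

text \<open>A hyperplane meets a subcomplex iff it is dual to an edge of that subcomplex.\<close>
definition crosses :: "'a set set \<Rightarrow> 'a set \<Rightarrow> bool" where
  "crosses H Y \<longleftrightarrow> (\<exists>f\<in>H. f \<subseteq> Y)"

definition parallel :: "('a \<Rightarrow> 'a \<Rightarrow> bool) \<Rightarrow> 'a set \<Rightarrow> 'a set \<Rightarrow> bool" where
  "parallel adj Y Z \<longleftrightarrow> (\<forall>H\<in>hyperplanes adj. crosses H Y \<longleftrightarrow> crosses H Z)"

end

theory Submission imports Defs begin

definition Pd :: "('a \<Rightarrow> 'a \<Rightarrow> bool) \<Rightarrow> nat \<Rightarrow> 'a \<Rightarrow> 'a \<Rightarrow> bool" where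
  "Pd adj n x y \<longleftrightarrow> (\<exists>xs. walk adj xs \<and> hd xs = x \<and> last xs = y \<and> length xs = Suc n)"

lemma walk_Cons: "ys \<noteq> [] \<Longrightarrow> walk adj (x#ys) \<longleftrightarrow> adj x (hd ys) \<and> walk adj ys"
  unfolding walk_def
  by (auto simp: nth_Cons hd_conv_nth split: nat.splits)

lemma Pd_0: "Pd adj 0 x y \<longleftrightarrow> x = y"
proof
  assume "Pd adj 0 x y"
  then obtain xs where "walk adj xs" "hd xs = x" "last xs = y" "length xs = Suc 0"
    unfolding Pd_def by blast
  then show "x = y" by (cases xs) auto
next
  assume "x = y" then show "Pd adj 0 x y" unfolding Pd_def
    by (rule_tac x="[x]" in exI) (auto simp: walk_def)
qed

lemma Pd_Suc: "Pd adj (Suc n) x y \<longleftrightarrow> (\<exists>w. adj x w \<and> Pd adj n w y)"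
proof
  assume "Pd adj (Suc n) x y"
  then obtain xs where xs: "walk adj xs" "hd xs = x" "last xs = y" "length xs = Suc (Suc n)"
    unfolding Pd_def by blast
  then obtain ys where ys: "xs = x # ys" "ys \<noteq> []"
    by (metis Suc_length_conv length_0_conv list.sel(1) nat.distinct(1))
  with xs have "adj x (hd ys)" "walk adj ys" using walk_Cons by metis+
  moreover have "last ys = y" "length ys = Suc n" using xs ys by auto
  ultimately show "\<exists>w. adj x w \<and> Pd adj n w y" unfolding Pd_def by blast
next
  assume "\<exists>w. adj x w \<and> Pd adj n w y"
  then obtain w ys where "adj x w" "walk adj ys" "hd ys = w" "last ys = y" "length ys = Suc n"
    unfolding Pd_def by blast
  moreover have "ys \<noteq> []" using calculation by auto
  ultimately show "Pd adj (Suc n) x y" unfolding Pd_def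
    by (rule_tac x="x#ys" in exI) (auto simp: walk_Cons)
qed

lemma Pd_add: "Pd adj m x y \<Longrightarrow> Pd adj n y z \<Longrightarrow> Pd adj (m+n) x z"
  by (induction m arbitrary: x) (auto simp: Pd_0 Pd_Suc)

definition Ws :: "('a \<Rightarrow> 'a \<Rightarrow> bool) \<Rightarrow> 'a \<Rightarrow> 'a \<Rightarrow> 'a set" where
  "Ws adj u v = {x. gdist adj x u < gdist adj x v}"

locale mg =
  fixes adj :: "'a \<Rightarrow> 'a \<Rightarrow> bool"
  assumes MG: "median_graph adj"
begin

abbreviation "d \<equiv> gdist adj"
abbreviation "I \<equiv> interval adj"
abbreviation "W \<equiv> Ws adj"

lemma sadj: "adj x y \<Longrightarrow> adj y x" using MG unfolding median_graph_def by blast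
lemma irr: "\<not> adj x x" using MG unfolding median_graph_def by blast
lemma conn: "\<exists>n. Pd adj n x y"
proof -
  obtain xs where "walk adj xs" "hd xs = x" "last xs = y" using MG unfolding median_graph_def by blast
  moreover then have "length xs = Suc (length xs - 1)" by (cases xs) (auto simp: walk_def)
  ultimately show ?thesis unfolding Pd_def by blast
qed
lemma med: "\<exists>m. m \<in> I x y \<and> m \<in> I y z \<and> m \<in> I x z"
  using MG unfolding median_graph_def by blast
lemma med_uniq: "m \<in> I x y \<Longrightarrow> m \<in> I y z \<Longrightarrow> m \<in> I x z \<Longrightarrow>
   m' \<in> I x y \<Longrightarrow> m' \<in> I y z \<Longrightarrow> m' \<in> I x z \<Longrightarrow> m = m'"
  using MG unfolding median_graph_def by blast

lemma d_eq: "d x y = (LEAST n. Pd adj n x y)" by (simp add: gdist_def Pd_def)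
lemma Pd_d: "Pd adj (d x y) x y" unfolding d_eq using conn by (rule LeastI_ex)
lemma d_le: "Pd adj n x y \<Longrightarrow> d x y \<le> n" unfolding d_eq by (rule Least_le)

lemma tri: "d x z \<le> d x y + d y z"
  using d_le[OF Pd_add[OF Pd_d[of x y] Pd_d[of y z]]] .

lemma Pd_sym: "Pd adj n x y \<Longrightarrow> Pd adj n y x"
proof (induction n arbitrary: x)
  case 0 then show ?case by (simp add: Pd_0)
next
  case (Suc n)
  then obtain w where "adj x w" "Pd adj n w y" by (auto simp: Pd_Suc)
  then have "Pd adj n y w" "Pd adj 1 w x" using Suc.IH sadj by (auto simp: Pd_Suc Pd_0)
  from Pd_add[OF this] show ?case by simp
qed

lemma dsym: "d x y = d y x"
  using d_le[OF Pd_sym[OF Pd_d[of x y]]] d_le[OF Pd_sym[OF Pd_d[of y x]]] by simp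

lemma d0[simp]: "d x y = 0 \<longleftrightarrow> x = y"
proof
  assume "d x y = 0" then show "x = y" using Pd_d[of x y] by (simp add: Pd_0)
next
  assume "x = y" then show "d x y = 0" using d_le[of 0 x y] by (simp add: Pd_0)
qed

lemma d_refl[simp]: "d x x = 0" by simp

lemma d_adj: "adj x y \<Longrightarrow> d x y = 1"
proof -
  assume a: "adj x y"
  then have "Pd adj 1 x y" by (auto simp: Pd_Suc Pd_0)
  then have "d x y \<le> 1" by (rule d_le)
  moreover have "x \<noteq> y" using a irr by auto
  ultimately show ?thesis by (metis d0 le_antisym less_one not_less)
qed

lemma d1: "d x y = 1 \<Longrightarrow> adj x y"
  using Pd_d[of x y] by (auto simp: Pd_Suc Pd_0)

lemma step: "x \<noteq> y \<Longrightarrow> \<exists>w. adj x w \<and> d w y + 1 = d x y"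
proof -
  assume "x \<noteq> y"
  then obtain n where n: "d x y = Suc n" by (cases "d x y") auto
  then obtain w where w: "adj x w" "Pd adj n w y" using Pd_d[of x y] by (auto simp: Pd_Suc)
  have "d w y \<le> n" using d_le[OF w(2)] .
  moreover have "d x y \<le> d x w + d w y" by (rule tri)
  ultimately show ?thesis using w d_adj[OF w(1)] n by (intro exI[of _ w]) auto
qed

lemma adj_le: "adj u v \<Longrightarrow> d z v \<le> d z u + 1"
  using tri[of z v u] d_adj by (metis dsym)

lemma bip: "adj u v \<Longrightarrow> d z u \<noteq> d z v"
proof
  assume a: "adj u v" "d z u = d z v"
  obtain m where m: "m \<in> I u v" "m \<in> I v z" "m \<in> I u z" using med by blast
  have duv: "d u v = 1" "d v u = 1" using a d_adj sadj by auto
  from m(1) have "d u m + d m v = 1" using duv by (simp add: interval_def)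
  then have "d u m = 0 \<or> d m v = 0" by arith
  then have "m = u \<or> m = v" by auto
  then show False
  proof
    assume "m = u"
    then have "d v u + d u z = d v z" using m(2) by (simp add: interval_def)
    then show False using a duv dsym by (metis add_cancel_right_left zero_neq_one)
  next
    assume "m = v"
    then have "d u v + d v z = d u z" using m(3) by (simp add: interval_def)
    then show False using a duv dsym by (metis add_cancel_right_left zero_neq_one)
  qed
qed

lemma adj_cases: "adj u v \<Longrightarrow> d z v = d z u + 1 \<or> d z u = d z v + 1"
  using adj_le[of u v z] adj_le[of v u z] bip[of u v z] sadj by fastforce

lemma quad: "adj u x \<Longrightarrow> adj v x \<Longrightarrow> u \<noteq> v \<Longrightarrow> d z u = d z v \<Longrightarrow>
   \<exists>w. adj u w \<and> adj v w \<and> d z w + 1 = d z u"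
proof -
  assume a: "adj u x" "adj v x" "u \<noteq> v" "d z u = d z v"
  have "d u v \<le> d u x + d x v" by (rule tri)
  moreover have "d u x = 1" "d x v = 1" using a d_adj sadj by auto
  moreover have "d u v \<noteq> 0" using a by auto
  moreover have "d u v \<noteq> 1"
  proof
    assume "d u v = 1" then have "adj u v" by (rule d1)
    from bip[OF this, of x] show False using d_adj[OF sadj[OF a(1)]] d_adj[OF sadj[OF a(2)]] by simp
  qed
  ultimately have duv: "d u v = 2" by arith
  obtain m where m: "m \<in> I u v" "m \<in> I v z" "m \<in> I u z" using med by blast
  have e: "d u m + d m v = 2" "d v m + d m z = d v z" "d u m + d m z = d u z"
    using m duv by (auto simp: interval_def)
  have s: "d m v = d v m" "d u z = d z u" "d v z = d z v" "d m z = d z m" by (rule dsym)+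
  have "d u m = 1" "d v m = 1" using e a(4) s by arith+
  moreover have "d z m + 1 = d z u" using e s calculation by arith
  ultimately show ?thesis using d1 by blast
qed

lemma sq_sub: "adj u v \<Longrightarrow> adj v y \<Longrightarrow> adj y x \<Longrightarrow> adj x u \<Longrightarrow> u \<noteq> y \<Longrightarrow> v \<noteq> x \<Longrightarrow>
   W u v \<subseteq> W x y"
proof
  fix z
  assume a: "adj u v" "adj v y" "adj y x" "adj x u" "u \<noteq> y" "v \<noteq> x" and "z \<in> W u v"
  then have zl: "d z u < d z v" by (simp add: Ws_def)
  show "z \<in> W x y"
  proof (rule ccontr)
    assume "z \<notin> W x y"
    then have nl: "\<not> d z x < d z y" by (simp add: Ws_def)
    have c1: "d z v = d z u + 1 \<or> d z u = d z v + 1" using adj_cases[OF a(1)] .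
    have c2: "d z x = d z u + 1 \<or> d z u = d z x + 1" using adj_cases[OF sadj[OF a(4)]] .
    have c3: "d z y = d z v + 1 \<or> d z v = d z y + 1" using adj_cases[OF a(2)] .
    have c4: "d z x = d z y + 1 \<or> d z y = d z x + 1" using adj_cases[OF a(3)] .
    have k: "d z x = d z u + 1" "d z y = d z u" "d z v = d z u + 1"
      using c1 c2 c3 c4 zl nl by arith+
    have dxu: "d x u = 1" "d u v = 1" "d x y = 1" "d y v = 1"
      using a d_adj sadj by auto
    have "d x v \<le> d x u + d u v" by (rule tri)
    moreover have "d x v \<noteq> 0" using a(6) by simp
    moreover have "d x v \<noteq> 1"
    proof
      assume "d x v = 1" then have "adj x v" by (rule d1)
      from bip[OF this, of u] show False using d_adj[OF sadj[OF a(4)]] d_adj[OF a(1)] by simp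
    qed
    ultimately have dxv: "d x v = 2" using dxu by arith
    have s: "d u z = d z u" "d v z = d z v" "d x z = d z x" "d y z = d z y" "d v u = d u v"
       "d v y = d y v" by (rule dsym)+
    have "u \<in> I x v" "u \<in> I v z" "u \<in> I x z" "y \<in> I x v" "y \<in> I v z" "y \<in> I x z"
      unfolding interval_def mem_Collect_eq using k dxu dxv s by arith+
    then have "u = y" by (rule med_uniq)
    then show False using a by simp
  qed
qed

lemma sq_eq: "adj u v \<Longrightarrow> adj v y \<Longrightarrow> adj y x \<Longrightarrow> adj x u \<Longrightarrow> u \<noteq> y \<Longrightarrow> v \<noteq> x \<Longrightarrow>
   W u v = W x y"
proof -
  assume a: "adj u v" "adj v y" "adj y x" "adj x u" "u \<noteq> y" "v \<noteq> x"
  show ?thesis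
    by (rule equalityI, rule sq_sub[OF a], rule sq_sub[OF sadj[OF a(3)] sadj[OF a(2)] sadj[OF a(1)]
        sadj[OF a(4)]]) (use a in auto)
qed

lemma adj_cases': "adj u v \<Longrightarrow> d v z = d u z + 1 \<or> d u z = d v z + 1"
  using adj_cases[of u v z] dsym[of u z] dsym[of v z] by simp

lemma compl: "adj u v \<Longrightarrow> z \<notin> W u v \<longleftrightarrow> z \<in> W v u"
  using adj_cases[of u v z] by (auto simp: Ws_def)

lemma inW: "adj u v \<Longrightarrow> u \<in> W u v" "adj u v \<Longrightarrow> v \<notin> W u v"
  using d_adj sadj by (auto simp: Ws_def)

lemma cross: "d u a = n \<Longrightarrow> adj u v \<Longrightarrow> adj a b \<Longrightarrow> a \<in> W u v \<Longrightarrow> b \<notin> W u v \<Longrightarrow>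
   W a b = W u v \<and> (sq_opp adj)\<^sup>*\<^sup>* {u,v} {a,b}"
proof (induction n arbitrary: u v)
  case 0
  then have ua: "u = a" by simp
  have "d b a = 1" using d_adj[OF sadj[OF 0(3)]] .
  moreover have "\<not> d b u < d b v" using 0(5) by (simp add: Ws_def)
  moreover have "d b u \<noteq> d b v" using bip[OF 0(2)] .
  ultimately have "d b v \<le> 1" "d b v \<noteq> 1" using ua by auto
  then have "d b v = 0" by arith
  then have "b = v" by simp
  then show ?case using ua by simp
next
  case (Suc k)
  have ua: "u \<noteq> a" using Suc(2) by auto
  obtain u' where u': "adj u u'" "d u' a + 1 = d u a" using step[OF ua] by blast
  have s1: "d a u' = d u' a" "d a u = d u a" "d u b = d b u" "d v b = d b v"
    "d v a = d a v" by (rule dsym)+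
  have du'a: "d a u' = k" using u'(2) Suc(2) s1 by simp
  have dau: "d a u = Suc k" using Suc(2) s1 by simp
  have "d a u < d a v" using Suc(5) by (simp add: Ws_def)
  then have dav: "d a v = k + 2" using adj_cases[OF Suc(3), of a] dau by arith
  have nb: "\<not> d b u < d b v" using Suc(6) by (simp add: Ws_def)
  have b1: "d b v = d b u + 1 \<or> d b u = d b v + 1" using adj_cases[OF Suc(3), of b] .
  have b2: "d b u = d a u + 1 \<or> d a u = d b u + 1" using adj_cases'[OF Suc(4), of u] .
  have b3: "d b v = d a v + 1 \<or> d a v = d b v + 1" using adj_cases'[OF Suc(4), of v] .
  have dbu: "d b u = k + 2" "d b v = k + 1"
    using b1 b2 b3 nb dau dav by arith+
  have t: "d b u' \<le> d b a + d a u'" by (rule tri)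
  have dba: "d b a = 1" using d_adj[OF sadj[OF Suc(4)]] .
  have b4: "d b u' = d b u + 1 \<or> d b u = d b u' + 1" using adj_cases[OF u'(1), of b] .
  have dbu': "d b u' = k + 1" using t dba b4 dbu du'a by arith
  have u'v: "u' \<noteq> v" using du'a dav by auto
  obtain w where w: "adj u' w" "adj v w" "d b w + 1 = d b u'"
    using quad[OF sadj[OF u'(1)] sadj[OF Suc(3)] u'v, of b] dbu' dbu by auto
  have uw: "u \<noteq> w" using w(3) dbu dbu' by auto
  have sq: "sq_opp adj {u,v} {u',w}" unfolding sq_opp_def
    apply (rule exI[of _ u], rule exI[of _ v], rule exI[of _ u'], rule exI[of _ w])
    using Suc(3) w(2) sadj[OF w(1)] sadj[OF u'(1)] uw u'v by simp
  have Weq: "W u v = W u' w"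
    using sq_eq[OF Suc(3) w(2) sadj[OF w(1)] sadj[OF u'(1)] uw] u'v by auto
  have "d u' a = k" using du'a s1 by simp
  then have "W a b = W u' w \<and> (sq_opp adj)\<^sup>*\<^sup>* {u',w} {a,b}"
    using Suc.IH[of u' w] w(1) Suc(4,5,6) Weq by simp
  then show ?case using Weq sq by (auto intro: converse_rtranclp_into_rtranclp)
qed

lemma cross': "adj u v \<Longrightarrow> adj a b \<Longrightarrow> a \<in> W u v \<Longrightarrow> b \<notin> W u v \<Longrightarrow>
   W a b = W u v \<and> (sq_opp adj)\<^sup>*\<^sup>* {u,v} {a,b}"
  using cross by blast

lemma hconv: "d z1 z = n \<Longrightarrow> adj u v \<Longrightarrow> z1 \<in> W u v \<Longrightarrow> z2 \<in> W u v \<Longrightarrow> z \<in> I z1 z2 \<Longrightarrow>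
   z \<in> W u v"
proof (induction n arbitrary: z1)
  case 0 then show ?case by simp
next
  case (Suc n)
  then have "z1 \<noteq> z" by auto
  then obtain w where w: "adj z1 w" "d w z + 1 = d z1 z" using step by blast
  have e: "d z1 z + d z z2 = d z1 z2" using Suc by (simp add: interval_def)
  have t1: "d w z2 \<le> d w z + d z z2" by (rule tri)
  have t2: "d z1 z2 \<le> d z1 w + d w z2" by (rule tri)
  have "d z1 w = 1" using d_adj w by auto
  then have eq: "d w z + d z z2 = d w z2" "d z1 z2 = d w z2 + 1" using e t1 t2 w by arith+
  show ?case
  proof (cases "w \<in> W u v")
    case True
    have "z \<in> I w z2" using eq by (simp add: interval_def)
    moreover have "d w z = n" using w Suc(2) by simp
    ultimately show ?thesis using Suc.IH[of w] True Suc(3,5) by blast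
  next
    case False
    then have "W z1 w = W u v" using cross'[OF Suc(3) w(1) Suc(4)] by blast
    then have "d z2 z1 < d z2 w" using Suc(5) by (auto simp: Ws_def)
    moreover have "d z2 z1 = d z1 z2" "d z2 w = d w z2" by (rule dsym)+
    ultimately show ?thesis using eq by arith
  qed
qed

lemma hconv': "adj u v \<Longrightarrow> z1 \<in> W u v \<Longrightarrow> z2 \<in> W u v \<Longrightarrow> z \<in> I z1 z2 \<Longrightarrow> z \<in> W u v"
  using hconv by blast

lemma edge: "d y1 y2 = n \<Longrightarrow> convex_sub adj Y \<Longrightarrow> y1 \<in> Y \<Longrightarrow> y2 \<in> Y \<Longrightarrow> y1 \<in> S \<Longrightarrow> y2 \<notin> S \<Longrightarrow>
   \<exists>a\<in>Y. \<exists>b\<in>Y. adj a b \<and> a \<in> S \<and> b \<notin> S"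
proof (induction n arbitrary: y1)
  case 0 then show ?case by auto
next
  case (Suc n)
  then have "y1 \<noteq> y2" by auto
  then obtain w where w: "adj y1 w" "d w y2 + 1 = d y1 y2" using step by blast
  have "w \<in> I y1 y2" using w d_adj[OF w(1)] by (simp add: interval_def)
  then have wY: "w \<in> Y" using Suc(3,4,5) unfolding convex_sub_def by blast
  show ?case
  proof (cases "w \<in> S")
    case True
    then show ?thesis using Suc.IH[of w] w Suc(2,3,5,7) wY by simp
  next
    case False
    then show ?thesis using w Suc(4,6) wY by blast
  qed
qed

lemma edge': "convex_sub adj Y \<Longrightarrow> y1 \<in> Y \<Longrightarrow> y2 \<in> Y \<Longrightarrow> y1 \<in> S \<Longrightarrow> y2 \<notin> S \<Longrightarrow>
   \<exists>a\<in>Y. \<exists>b\<in>Y. adj a b \<and> a \<in> S \<and> b \<notin> S"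
  using edge by blast

lemma gate_ex: "convex_sub adj A \<Longrightarrow> \<exists>g\<in>A. \<forall>a\<in>A. d x a = d x g + d g a"
proof -
  assume A: "convex_sub adj A"
  then obtain a0 where "a0 \<in> A" unfolding convex_sub_def by blast
  then obtain g where g: "g \<in> A" "\<forall>y. y \<in> A \<longrightarrow> d x g \<le> d x y"
    using ex_has_least_nat[of "\<lambda>y. y \<in> A" a0 "d x"] by blast
  have "\<forall>a\<in>A. d x a = d x g + d g a"
  proof
    fix a assume a: "a \<in> A"
    obtain m where m: "m \<in> I x g" "m \<in> I g a" "m \<in> I x a" using med by blast
    have "m \<in> A" using m(2) A g(1) a unfolding convex_sub_def by blast
    then have "d x g \<le> d x m" using g by blast
    moreover have "d x m + d m g = d x g" using m(1) by (simp add: interval_def)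
    ultimately have "d m g = 0" by arith
    then have "m = g" by simp
    then show "d x a = d x g + d g a" using m(3) by (simp add: interval_def)
  qed
  then show ?thesis using g by blast
qed

lemma gate_eq: "convex_sub adj A \<Longrightarrow> g \<in> A \<Longrightarrow> (\<forall>a\<in>A. d x a = d x g + d g a) \<Longrightarrow> gate adj A x = g"
  unfolding gate_def
proof (rule the_equality)
  assume g: "g \<in> A" "\<forall>a\<in>A. d x a = d x g + d g a"
  show "g \<in> A \<and> (\<forall>y\<in>A. y \<noteq> g \<longrightarrow> d x g < d x y)"
  proof (intro conjI ballI impI)
    fix y assume y: "y \<in> A" "y \<noteq> g"
    then have "d g y \<noteq> 0" by simp
    moreover have "d x y = d x g + d g y" using g(2) y(1) by (rule bspec)
    ultimately show "d x g < d x y" by arith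
  qed (rule g(1))
next
  fix g' assume g: "g \<in> A" "\<forall>a\<in>A. d x a = d x g + d g a"
    and g': "g' \<in> A \<and> (\<forall>y\<in>A. y \<noteq> g' \<longrightarrow> d x g' < d x y)"
  show "g' = g"
  proof (rule ccontr)
    assume "g' \<noteq> g"
    then have "g \<noteq> g'" by simp
    then have "d x g' < d x g" using g' g(1) by blast
    moreover have "d x g' = d x g + d g g'" using g(2) g' by (meson bspec)
    ultimately show False by arith
  qed
qed

lemma gate_in: "convex_sub adj A \<Longrightarrow> gate adj A x \<in> A"
proof -
  assume A: "convex_sub adj A"
  obtain g where g: "g \<in> A" "\<forall>a\<in>A. d x a = d x g + d g a" using gate_ex[OF A] by blast
  have "gate adj A x = g" using gate_eq[OF A g] .
  then show ?thesis using g(1) by (simp only:)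
qed

lemma gate_I: "convex_sub adj A \<Longrightarrow> a \<in> A \<Longrightarrow> gate adj A x \<in> I x a"
proof -
  assume A: "convex_sub adj A" and a: "a \<in> A"
  obtain g where g: "g \<in> A" "\<forall>a\<in>A. d x a = d x g + d g a" using gate_ex[OF A] by blast
  have "gate adj A x = g" using gate_eq[OF A g] .
  moreover have "d x a = d x g + d g a" using g(2) a by (rule bspec)
  ultimately show ?thesis unfolding interval_def by simp
qed

lemma L2: "convex_sub adj A \<Longrightarrow> adj u v \<Longrightarrow> a1 \<in> A \<Longrightarrow> a1 \<in> W u v \<Longrightarrow> a2 \<in> A \<Longrightarrow> a2 \<notin> W u v \<Longrightarrow>
   gate adj A x \<in> W u v \<longleftrightarrow> x \<in> W u v"
proof -
  assume A: "convex_sub adj A" and uv: "adj u v" and a: "a1 \<in> A" "a1 \<in> W u v" "a2 \<in> A" "a2 \<notin> W u v"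
  show ?thesis
  proof
    assume g: "gate adj A x \<in> W u v"
    show "x \<in> W u v"
    proof (rule ccontr)
      assume "x \<notin> W u v"
      then have "x \<in> W v u" "a2 \<in> W v u" using compl[OF uv] a by auto
      then have "gate adj A x \<in> W v u" using hconv'[OF sadj[OF uv]] gate_I[OF A a(3)] by blast
      then show False using g compl[OF uv] by blast
    qed
  next
    assume "x \<in> W u v"
    then show "gate adj A x \<in> W u v" using hconv'[OF uv] gate_I[OF A a(1)] a(2) by blast
  qed
qed

lemma sep: "x \<noteq> y \<Longrightarrow> \<exists>u v. adj u v \<and> x \<in> W u v \<and> y \<notin> W u v"
proof -
  assume "x \<noteq> y"
  then obtain w where w: "adj x w" "d w y + 1 = d x y" using step by blast
  have "d y w < d y x" using w dsym[of w y] dsym[of x y] by simp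
  then show ?thesis using w d_adj[OF w(1)] by (intro exI[of _ x] exI[of _ w]) (auto simp: Ws_def)
qed

lemma maj: "m \<in> I x y \<Longrightarrow> m \<in> I y z \<Longrightarrow> m \<in> I x z \<Longrightarrow> adj u v \<Longrightarrow>
   m \<in> W u v \<longleftrightarrow> (x \<in> W u v \<and> y \<in> W u v) \<or> (y \<in> W u v \<and> z \<in> W u v) \<or> (x \<in> W u v \<and> z \<in> W u v)"
proof -
  assume m: "m \<in> I x y" "m \<in> I y z" "m \<in> I x z" and uv: "adj u v"
  have P: "m \<in> W p q" if "adj p q" "(x \<in> W p q \<and> y \<in> W p q) \<or> (y \<in> W p q \<and> z \<in> W p q) \<or> (x \<in> W p q \<and> z \<in> W p q)" for p q
    using that m hconv' by blast
  show ?thesis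
  proof
    assume mW: "m \<in> W u v"
    show "(x \<in> W u v \<and> y \<in> W u v) \<or> (y \<in> W u v \<and> z \<in> W u v) \<or> (x \<in> W u v \<and> z \<in> W u v)"
    proof (rule ccontr)
      assume "\<not> ?thesis"
      then have "(x \<in> W v u \<and> y \<in> W v u) \<or> (y \<in> W v u \<and> z \<in> W v u) \<or> (x \<in> W v u \<and> z \<in> W v u)"
        using compl[OF uv] by blast
      then have "m \<in> W v u" using P[OF sadj[OF uv]] by blast
      then show False using mW compl[OF uv] by blast
    qed
  qed (rule P[OF uv])
qed

lemma L1: "convex_sub adj A \<Longrightarrow> convex_sub adj B \<Longrightarrow> convex_sub adj (gate adj A ` B)"
proof -
  assume A: "convex_sub adj A" and B: "convex_sub adj B"
  let ?g = "gate adj A"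
  have "\<forall>p\<in>?g ` B. \<forall>q\<in>?g ` B. I p q \<subseteq> ?g ` B"
  proof (intro ballI subsetI)
    fix p q z assume "p \<in> ?g ` B" "q \<in> ?g ` B" and z: "z \<in> I p q"
    then obtain b1 b2 where b: "b1 \<in> B" "b2 \<in> B" "p = ?g b1" "q = ?g b2" by blast
    obtain m where m: "m \<in> I b1 b2" "m \<in> I b2 z" "m \<in> I b1 z" using med by blast
    have mB: "m \<in> B" using m(1) b B unfolding convex_sub_def by blast
    have zA: "z \<in> A" using z b gate_in[OF A] A unfolding convex_sub_def by blast
    have "?g m = z"
    proof (rule ccontr)
      have key: "?g m \<in> W u v \<longleftrightarrow> z \<in> W u v" if uv: "adj u v" for u v
      proof (cases "(\<exists>a1\<in>A. a1 \<in> W u v) \<and> (\<exists>a2\<in>A. a2 \<notin> W u v)")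
        case True
        then obtain a1 a2 where a: "a1 \<in> A" "a1 \<in> W u v" "a2 \<in> A" "a2 \<notin> W u v" by blast
        note L = L2[OF A uv a]
        have "?g m \<in> W u v \<longleftrightarrow> m \<in> W u v" by (rule L)
        also have "\<dots> \<longleftrightarrow> z \<in> W u v"
        proof -
          have mm: "m \<in> W u v \<longleftrightarrow> (b1 \<in> W u v \<and> b2 \<in> W u v) \<or> (b2 \<in> W u v \<and> z \<in> W u v) \<or> (b1 \<in> W u v \<and> z \<in> W u v)"
            by (rule maj[OF m uv])
          have c1: "b1 \<in> W u v \<Longrightarrow> b2 \<in> W u v \<Longrightarrow> z \<in> W u v"
            using hconv'[OF uv _ _ z] L b by blast
          have c2: "b1 \<notin> W u v \<Longrightarrow> b2 \<notin> W u v \<Longrightarrow> z \<notin> W u v"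
          proof -
            assume "b1 \<notin> W u v" "b2 \<notin> W u v"
            then have "p \<in> W v u" "q \<in> W v u" using L b compl[OF uv] by auto
            then have "z \<in> W v u" using hconv'[OF sadj[OF uv] _ _ z] by blast
            then show "z \<notin> W u v" using compl[OF uv] by blast
          qed
          show ?thesis using mm c1 c2 by blast
        qed
        finally show ?thesis .
      next
        case False
        then have "A \<subseteq> W u v \<or> A \<inter> W u v = {}" by blast
        then show ?thesis using zA gate_in[OF A, of m] by blast
      qed
      assume "?g m \<noteq> z"
      then obtain u v where "adj u v" "?g m \<in> W u v" "z \<notin> W u v" using sep by blast
      then show False using key by blast
    qed
    then show "z \<in> ?g ` B" using mB by blast
  qed
  moreover have "?g ` B \<noteq> {}" using B unfolding convex_sub_def by blast
  ultimately show ?thesis unfolding convex_sub_def by blast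
qed

definition T :: "'a \<Rightarrow> 'a \<Rightarrow> 'a set \<Rightarrow> bool" where
  "T u v Y \<longleftrightarrow> (\<exists>y\<in>Y. y \<in> W u v) \<and> (\<exists>y\<in>Y. y \<notin> W u v)"

lemma LT: "convex_sub adj A \<Longrightarrow> convex_sub adj B \<Longrightarrow> adj u v \<Longrightarrow>
   T u v (gate adj A ` B) \<longleftrightarrow> T u v A \<and> T u v B"
proof -
  assume A: "convex_sub adj A" and B: "convex_sub adj B" and uv: "adj u v"
  show ?thesis
  proof
    assume "T u v (gate adj A ` B)"
    then obtain b1 b2 where b: "b1 \<in> B" "b2 \<in> B" "gate adj A b1 \<in> W u v" "gate adj A b2 \<notin> W u v"
      unfolding T_def by blast
    then have TA: "T u v A" unfolding T_def using gate_in[OF A] by blast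
    then obtain a1 a2 where a: "a1 \<in> A" "a1 \<in> W u v" "a2 \<in> A" "a2 \<notin> W u v" unfolding T_def by blast
    have "b1 \<in> W u v" "b2 \<notin> W u v" using L2[OF A uv a] b by auto
    then show "T u v A \<and> T u v B" using TA b unfolding T_def by blast
  next
    assume "T u v A \<and> T u v B"
    then obtain a1 a2 b1 b2 where a: "a1 \<in> A" "a1 \<in> W u v" "a2 \<in> A" "a2 \<notin> W u v"
      and b: "b1 \<in> B" "b2 \<in> B" "b1 \<in> W u v" "b2 \<notin> W u v" unfolding T_def by blast
    then show "T u v (gate adj A ` B)" using L2[OF A uv a] unfolding T_def by blast
  qed
qed

lemma inv: "(sq_opp adj)\<^sup>*\<^sup>* {u,v} f \<Longrightarrow> adj u v \<Longrightarrow>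
   \<exists>a b. f = {a,b} \<and> adj a b \<and> a \<in> W u v \<and> b \<notin> W u v"
proof (induction rule: rtranclp_induct)
  case base then show ?case using inW[OF base] by (intro exI[of _ u] exI[of _ v]) simp
next
  case (step f g)
  then obtain a b where ab: "f = {a,b}" "adj a b" "a \<in> W u v" "b \<notin> W u v" by blast
  have Wab: "W a b = W u v" using cross'[OF step(4) ab(2,3,4)] by blast
  obtain p q x y where s: "f = {p,q}" "g = {x,y}" "adj p q" "adj q y" "adj y x" "adj x p" "p \<noteq> y" "q \<noteq> x"
    using step(2) unfolding sq_opp_def by blast
  have "{a,b} = {p,q}" using ab(1) s(1) by simp
  then have "(a = p \<and> b = q) \<or> (a = q \<and> b = p)" by (simp add: doubleton_eq_iff)
  then show ?case
  proof
    assume "a = p \<and> b = q"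
    then have "W x y = W u v" using sq_eq[OF s(3-8)] Wab by simp
    then show ?thesis using s(2) sadj[OF s(5)] inW[OF sadj[OF s(5)]]
      by (intro exI[of _ x] exI[of _ y]) simp
  next
    assume "a = q \<and> b = p"
    then have "W y x = W u v" using sq_eq[OF sadj[OF s(3)] sadj[OF s(6)] sadj[OF s(5)] sadj[OF s(4)]] s(7,8) Wab by simp
    moreover have "g = {y,x}" using s(2) by (simp add: insert_commute)
    ultimately show ?thesis using s(5) inW[OF s(5)]
      by (intro exI[of _ y] exI[of _ x]) simp
  qed
qed

lemma Xlem: "H \<in> hyperplanes adj \<Longrightarrow> \<exists>u v. adj u v \<and> (\<forall>Y. convex_sub adj Y \<longrightarrow> (crosses H Y \<longleftrightarrow> T u v Y))"
proof -
  assume "H \<in> hyperplanes adj"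
  then obtain e where e: "H = {f. (sq_opp adj)\<^sup>*\<^sup>* e f}" "is_edge adj e"
    unfolding hyperplanes_def by blast
  then obtain u v where ee: "e = {u,v}" and uv: "adj u v" unfolding is_edge_def by blast
  have H: "H = {f. (sq_opp adj)\<^sup>*\<^sup>* {u,v} f}" using e(1) ee by simp
  have "crosses H Y \<longleftrightarrow> T u v Y" if Y: "convex_sub adj Y" for Y
  proof
    assume "crosses H Y"
    then obtain f where f: "(sq_opp adj)\<^sup>*\<^sup>* {u,v} f" "f \<subseteq> Y" unfolding crosses_def H by blast
    obtain a b where ab: "f = {a,b}" "a \<in> W u v" "b \<notin> W u v" using inv[OF f(1) uv] by blast
    have "a \<in> Y" "b \<in> Y" using f(2) ab(1) by auto
    then show "T u v Y" using ab(2,3) unfolding T_def by blast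
  next
    assume "T u v Y"
    then obtain y1 y2 where yy: "y1 \<in> Y" "y2 \<in> Y" "y1 \<in> W u v" "y2 \<notin> W u v" unfolding T_def by blast
    obtain a b where ab: "a \<in> Y" "b \<in> Y" "adj a b" "a \<in> W u v" "b \<notin> W u v"
      using edge'[OF Y yy] by blast
    then have "(sq_opp adj)\<^sup>*\<^sup>* {u,v} {a,b}" using cross'[OF uv ab(3-5)] by blast
    then have "{a,b} \<in> H" using H by simp
    moreover have "{a,b} \<subseteq> Y" using ab(1,2) by simp
    ultimately show "crosses H Y" unfolding crosses_def by (rule bexI[rotated])
  qed
  then show ?thesis using uv by blast
qed

end

theorem mainTheorem17:
  fixes adj :: "'a \<Rightarrow> 'a \<Rightarrow> bool" and C D E :: "'a set"
  assumes "median_graph adj"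
    and "convex_sub adj C" and "convex_sub adj D" and "convex_sub adj E"
  shows "parallel adj (gate adj (gate adj C ` D) ` E) (gate adj C ` (gate adj D ` E))
       \<and> parallel adj (gate adj (gate adj C ` D) ` E) (gate adj C ` (gate adj E ` D))
       \<and> parallel adj (gate adj C ` (gate adj D ` E)) (gate adj C ` (gate adj E ` D))"
proof -
  interpret mg adj by (rule mg.intro) (rule assms(1))
  note cC = assms(2) and cD = assms(3) and cE = assms(4)
  have c1: "convex_sub adj (gate adj C ` D)" using L1[OF cC cD] .
  have c2: "convex_sub adj (gate adj D ` E)" using L1[OF cD cE] .
  have c3: "convex_sub adj (gate adj E ` D)" using L1[OF cE cD] .
  have s1: "convex_sub adj (gate adj (gate adj C ` D) ` E)" using L1[OF c1 cE] .
  have s2: "convex_sub adj (gate adj C ` (gate adj D ` E))" using L1[OF cC c2] .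
  have s3: "convex_sub adj (gate adj C ` (gate adj E ` D))" using L1[OF cC c3] .
  have key: "crosses H (gate adj (gate adj C ` D) ` E) = crosses H (gate adj C ` (gate adj D ` E))
      \<and> crosses H (gate adj (gate adj C ` D) ` E) = crosses H (gate adj C ` (gate adj E ` D))"
    if H: "H \<in> hyperplanes adj" for H
  proof -
    obtain u v where uv: "adj u v" and X: "\<And>Y. convex_sub adj Y \<Longrightarrow> crosses H Y \<longleftrightarrow> T u v Y"
      using Xlem[OF H] by blast
    have "crosses H (gate adj (gate adj C ` D) ` E) \<longleftrightarrow> T u v C \<and> T u v D \<and> T u v E"
      using X[OF s1] LT[OF c1 cE uv] LT[OF cC cD uv] by simp
    moreover have "crosses H (gate adj C ` (gate adj D ` E)) \<longleftrightarrow> T u v C \<and> T u v D \<and> T u v E"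
      using X[OF s2] LT[OF cC c2 uv] LT[OF cD cE uv] by simp
    moreover have "crosses H (gate adj C ` (gate adj E ` D)) \<longleftrightarrow> T u v C \<and> T u v D \<and> T u v E"
      using X[OF s3] LT[OF cC c3 uv] LT[OF cE cD uv] by auto
    ultimately show ?thesis by simp
  qed
  show ?thesis unfolding parallel_def using key by blast
qed

end
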